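(* The function \[ F(x)=\frac{2\sqrt2+(1+x)^{1/2}}{(1-x)^{1/2}}\arccos x \] is strictly decreasing on $(0,1)$. Consequently, for all $x\in(0,1)$, \[ \frac{6(1-x)^{1/2}}{2\sqrt2+(1+x)^{1/2}}<\arccos x<\frac{\bigl(\frac12+\sqrt2\bigr)\pi\,(1-x)^{1/2}}{2\sqrt2+(1+x)^{1/2}}, \] and the constants $6$ and $\bigl(\frac12+\sqrt2\bigr)\pi$ are the best possible (i.e. $6$ cannot be replaced by a larger constant and $(\frac12+\sqrt2)\pi$ cannot be replaced by a smaller constant).
   Context: $\arccos$ denotes the principal inverse cosine with values in $[0,\pi]$. *)

theory Defs
  imports "HOL-Analysis.Analysis"
begin

definition F3 :: "real \<Rightarrow> real" where
  "F3 x = (2 * sqrt 2 + sqrt (1 + x)) / sqrt (1 - x) * arccos x"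

definition G3 :: "real \<Rightarrow> real" where
  "G3 x = sqrt (1 - x) / (2 * sqrt 2 + sqrt (1 + x))"

end

theory Submission
  imports Defs "HOL-Real_Asymp.Real_Asymp"
begin

definition H :: "real \<Rightarrow> real" where
  "H u = u * (2 + cos u) / sin u"

lemma sin_lt_self: assumes "0 < u" "u < pi/2" shows "sin u < u"
proof -
  have "(\<lambda>x. x - sin x) 0 < (\<lambda>x. x - sin x) u"
  proof (rule DERIV_pos_imp_increasing_open[OF assms(1)])
    fix y assume y: "0 < y" "y < u"
    have "cos y < cos 0" using y assms by (intro cos_monotone_0_pi) auto
    then show "\<exists>d. ((\<lambda>x. x - sin x) has_real_derivative d) (at y) \<and> d > 0"
      by (intro exI[of _ "1 - cos y"]) (auto intro!: derivative_eq_intros)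
  next
    show "continuous_on {0..u} (\<lambda>x. x - sin x)" by (intro continuous_intros)
  qed
  then show ?thesis by simp
qed

definition N :: "real \<Rightarrow> real" where
  "N u = 2 * sin u + sin u * cos u - u - 2 * u * cos u"

lemma N_pos: assumes "0 < u" "u < pi/2" shows "N u > 0"
proof -
  have "N 0 < N u"
  proof (rule DERIV_pos_imp_increasing_open[OF assms(1)])
    fix y assume y: "0 < y" "y < u"
    have "sin y > 0" using y assms by (intro sin_gt_zero) auto
    moreover have "sin y < y" using y assms by (intro sin_lt_self) auto
    ultimately have pos: "2 * sin y * (y - sin y) > 0" by simp
    have "(N has_real_derivative
       (2 * cos y + (cos y * cos y - sin y * sin y) - 1 - (2 * cos y - 2 * y * sin y))) (at y)"
      unfolding N_def by (auto intro!: derivative_eq_intros)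
    moreover have "2 * cos y + (cos y * cos y - sin y * sin y) - 1 - (2 * cos y - 2 * y * sin y)
        = 2 * sin y * (y - sin y)"
      using sin_cos_squared_add[of y] by (simp add: algebra_simps power2_eq_square)
    ultimately show "\<exists>d. (N has_real_derivative d) (at y) \<and> d > 0" using pos by metis
  next
    show "continuous_on {0..u} N" unfolding N_def by (intro continuous_intros)
  qed
  then show ?thesis by (simp add: N_def)
qed

lemma H_mono: assumes "0 < a" "a < b" "b < pi/2" shows "H a < H b"
proof (rule DERIV_pos_imp_increasing[OF assms(2)])
  fix y assume y: "a \<le> y" "y \<le> b"
  have s: "sin y > 0" using y assms by (intro sin_gt_zero) auto
  have "(H has_real_derivative
     (((1 * (2 + cos y) + y * (- sin y)) * sin y - y * (2 + cos y) * cos y) / (sin y * sin y))) (at y)"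
    unfolding H_def using s by (auto intro!: derivative_eq_intros)
  moreover have "((1 * (2 + cos y) + y * (- sin y)) * sin y - y * (2 + cos y) * cos y) = N y"
  proof -
    have "sin y * sin y + cos y * cos y = 1" using sin_cos_squared_add[of y] by (simp add: power2_eq_square)
    then have e: "y * (cos y * cos y) + y * (sin y * sin y) = y" by (metis distrib_left mult_1_right add.commute)
    show ?thesis unfolding N_def using e by (simp add: algebra_simps)
  qed
  moreover have "N y > 0" using y assms by (intro N_pos) auto
  ultimately show "\<exists>d. (H has_real_derivative d) (at y) \<and> d > 0" using s
    by (metis divide_pos_pos mult_pos_pos)
qed

lemma H_lim: "(H \<longlongrightarrow> 3) (at_right 0)"
  unfolding H_def by real_asymp

lemma F3_cos: assumes "0 < u" "u < pi/4" shows "F3 (cos (2*u)) = 2 * H u"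
proof -
  have s: "sin u > 0" using assms by (intro sin_gt_zero) auto
  have c: "cos u > 0" using assms by (intro cos_gt_zero_pi) auto
  have "arccos (cos (2*u)) = 2*u" using assms by (intro arccos_cos) auto
  moreover have "sqrt (1 - cos (2*u)) = sqrt 2 * sin u"
    using s by (simp add: cos_double_sin real_sqrt_mult)
  moreover have "sqrt (1 + cos (2*u)) = sqrt 2 * cos u"
    using c by (simp add: cos_double_cos real_sqrt_mult)
  ultimately show ?thesis using s unfolding F3_def H_def
    by (simp add: field_simps)
qed

lemma x_as_cos: assumes "0 < x" "x < (1::real)"
  obtains u where "0 < u" "u < pi/4" "x = cos (2*u)"
proof
  have "arccos 1 < arccos x" using assms by (intro arccos_less_arccos) auto
  then show "0 < arccos x / 2" by simp
  have "arccos x < arccos 0" using assms by (intro arccos_less_arccos) auto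
  then show "arccos x / 2 < pi/4" by simp
  show "x = cos (2 * (arccos x / 2))" using assms by simp
qed

lemma G3_pos: assumes "0 < x" "x < (1::real)" shows "G3 x > 0"
proof -
  have "sqrt (1 + x) \<ge> 0" "sqrt 2 > 0" using assms by auto
  then have "2 * sqrt 2 + sqrt (1 + x) > 0" by linarith
  then show ?thesis using assms unfolding G3_def by (intro divide_pos_pos) auto
qed

lemma FG: assumes "0 < x" "x < (1::real)" shows "arccos x = F3 x * G3 x"
proof -
  have "sqrt (1 + x) \<ge> 0" "sqrt 2 > 0" using assms by auto
  then have "2 * sqrt 2 + sqrt (1 + x) > 0" by linarith
  moreover have "sqrt (1 - x) > 0" using assms by auto
  ultimately have "\<And>a. (2 * sqrt 2 + sqrt (1 + x)) / sqrt (1 - x) * a * (sqrt (1 - x) / (2 * sqrt 2 + sqrt (1 + x))) = a"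
    by (metis (no_types, lifting) divide_self_if less_numeral_extra(3) mult.commute mult.left_commute times_divide_times_eq nonzero_mult_div_cancel_left mult_1_right)
  then show ?thesis unfolding F3_def G3_def by simp
qed

lemma H_ge3: assumes "0 < v" "v < pi/2" shows "3 \<le> H v"
proof (rule tendsto_upperbound[OF H_lim])
  show "\<forall>\<^sub>F x in at_right 0. H x \<le> H v"
    using eventually_at_right_real[OF assms(1)]
    by eventually_elim (use assms in \<open>auto intro!: less_imp_le[OF H_mono]\<close>)
qed simp

lemma H_pi4: "2 * H (pi/4) = (1/2 + sqrt 2) * pi"
  unfolding H_def by (simp add: sin_45 cos_45 field_simps real_sqrt_divide)

lemma bounds: assumes x: "x \<in> {0<..<1::real}"
  shows "6 * G3 x < arccos x \<and> arccos x < (1/2 + sqrt 2) * pi * G3 x"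
proof -
  obtain u where u: "0 < u" "u < pi/4" "x = cos (2*u)" using x_as_cos x by auto
  have "H (u/2) < H u" using u by (intro H_mono) auto
  moreover have "3 \<le> H (u/2)" using u by (intro H_ge3) auto
  ultimately have l: "6 < F3 x" using u F3_cos by simp
  have "H u < H (pi/4)" using u by (intro H_mono) auto
  then have r: "F3 x < (1/2 + sqrt 2) * pi" using u F3_cos H_pi4 by simp
  have g: "G3 x > 0" using x G3_pos by auto
  have e: "arccos x = F3 x * G3 x" using FG x by auto
  show "6 * G3 x < arccos x \<and> arccos x < (1/2 + sqrt 2) * pi * G3 x"
    unfolding e using l r g by (simp add: mult_strict_right_mono)
qed

theorem theorem3:
  shows "strict_antimono_on {0<..<1} F3
    \<and> (\<forall>x\<in>{0<..<1::real}. 6 * G3 x < arccos x \<and> arccos x < (1/2 + sqrt 2) * pi * G3 x)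
    \<and> (\<forall>c::real. c > 6 \<longrightarrow> \<not> (\<forall>x\<in>{0<..<1::real}. c * G3 x < arccos x))
    \<and> (\<forall>c::real. c < (1/2 + sqrt 2) * pi \<longrightarrow> \<not> (\<forall>x\<in>{0<..<1::real}. arccos x < c * G3 x))"
proof (intro conjI allI impI ballI)
  show "strict_antimono_on {0<..<1} F3"
  proof (rule monotone_onI)
    fix x y :: real assume xy: "x \<in> {0<..<1}" "y \<in> {0<..<1}" "x < y"
    have xy01: "0 < x" "x < 1" "0 < y" "y < 1" using xy by auto
    obtain u where u: "0 < u" "u < pi/4" "x = cos (2*u)" using x_as_cos[OF xy01(1) xy01(2)] by blast
    obtain t where t: "0 < t" "t < pi/4" "y = cos (2*t)" using x_as_cos[OF xy01(3) xy01(4)] by blast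
    have "arccos y < arccos x" using xy by (intro arccos_less_arccos) auto
    then have "t < u" using u t arccos_cos[of "2*u"] arccos_cos[of "2*t"] by simp
    then have "H t < H u" using u t by (intro H_mono) auto
    then show "F3 y < F3 x" using u t F3_cos by simp
  qed
next
  fix x :: real assume x: "x \<in> {0<..<1}"
  show "6 * G3 x < arccos x" using bounds[OF x] by simp
next
  fix x :: real assume x: "x \<in> {0<..<1}"
  show "arccos x < (1/2 + sqrt 2) * pi * G3 x" using bounds[OF x] by simp
next
  fix c :: real assume c: "c > 6"
  have "\<forall>\<^sub>F w in at_right 0. H w < c/2" using c by (intro order_tendstoD[OF H_lim]) simp
  moreover have "\<forall>\<^sub>F w in at_right 0. w \<in> {0<..<pi/4}"
    by (intro eventually_at_right_real) simp
  ultimately have "\<forall>\<^sub>F w in at_right 0. H w < c/2 \<and> w \<in> {0<..<pi/4}"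
    by (rule eventually_conj)
  then obtain w where w: "H w < c/2" "0 < w" "w < pi/4"
    using eventually_happens[of _ "at_right (0::real)"] by auto
  define x where "x = cos (2*w)"
  have x: "0 < x" "x < 1"
  proof -
    have "cos (2*w) > 0" using w by (intro cos_gt_zero_pi) auto
    moreover have "cos (2*w) < cos 0" using w by (intro cos_monotone_0_pi) auto
    ultimately show "0 < x" "x < 1" by (auto simp: x_def)
  qed
  have "F3 x < c" using F3_cos w x_def by simp
  then have "arccos x \<le> c * G3 x" using FG[OF x] G3_pos[OF x]
    by (simp add: mult_right_mono less_imp_le)
  then show "\<not> (\<forall>x\<in>{0<..<1::real}. c * G3 x < arccos x)" using x by force
next
  fix c :: real assume c: "c < (1/2 + sqrt 2) * pi"
  have "isCont H (pi/4)"
  proof -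
    have "sin (pi/4) \<noteq> 0" by (simp add: sin_45)
    then show ?thesis unfolding H_def by (intro continuous_intros) auto
  qed
  then have "(H \<longlongrightarrow> H (pi/4)) (at_left (pi/4))"
    by (simp add: isCont_def filterlim_at_split)
  then have "\<forall>\<^sub>F w in at_left (pi/4). H w > c/2" using c H_pi4
    by (intro order_tendstoD) auto
  moreover have "\<forall>\<^sub>F w in at_left (pi/4). w \<in> {0<..<pi/4}"
    by (intro eventually_at_left_real) simp
  ultimately have "\<forall>\<^sub>F w in at_left (pi/4). H w > c/2 \<and> w \<in> {0<..<pi/4}"
    by (rule eventually_conj)
  then obtain w where w: "H w > c/2" "0 < w" "w < pi/4"
    using eventually_happens[of _ "at_left (pi/4::real)"] by auto
  define x where "x = cos (2*w)"
  have x: "0 < x" "x < 1"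
  proof -
    have "cos (2*w) > 0" using w by (intro cos_gt_zero_pi) auto
    moreover have "cos (2*w) < cos 0" using w by (intro cos_monotone_0_pi) auto
    ultimately show "0 < x" "x < 1" by (auto simp: x_def)
  qed
  have "F3 x > c" using F3_cos w x_def by simp
  then have "c * G3 x \<le> arccos x" using FG[OF x] G3_pos[OF x]
    by (simp add: mult_right_mono less_imp_le)
  then show "\<not> (\<forall>x\<in>{0<..<1::real}. arccos x < c * G3 x)" using x by force
qed

end
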